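(* For Pólya trees $t$ let $S_t$, $T$ be as in the context. Then \[ \sum_{\substack{t \in \mathcal{P}_{\le n}\\ |t| \ge \log n}} \left(1 - \frac{[z^n]S_t(z)}{[z^n]T(z)}\right) = \Omega\!\left(\sqrt{n}\right) \quad \text{as } n\to\infty, \] where $\log$ denotes the logarithm to base $1/\sigma$.
   Context: A recursive tree of size $n$ is a rooted non-plane tree with $n$ nodes labeled $1,\dots,n$ with labels increasing along every path from the root; their exponential generating function is $T(z)=\ln\frac{1}{1-z}$, so $[z^n]T(z)=1/n$. A Pólya tree is an unlabeled rooted non-plane tree; $\mathcal{P}_{\le n}$ is the set of Pólya trees with at most $n$ nodes; $\sigma\approx 0.338$ is the radius of convergence of the ordinary generating function of Pólya trees. A fringe subtree is a node together with all its descendants; its shape is the Pólya tree obtained by forgetting labels. For a Pólya tree $t$ with $k$ nodes, $\ell(t)$ is the number of increasing labelings of $t$ by $1,\dots,k$, $w(t)=\ell(t)/k!$ and $P_t(z)=w(t)z^k$. $S_t(z)$ is the exponential generating function of recursive trees having no fringe subtree of shape $t$; it is the solution of $S_t'(z)=\exp(S_t(z))-P_t'(z)$, $S_t(0)=0$, explicitly $S_t(z)=\ln\frac{1}{1-\int_0^z e^{-P_t(v)}\,dv}-P_t(z)$. *)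

theory Defs
  imports "HOL-Analysis.Analysis" "HOL-Library.Multiset" "HOL-Library.Landau_Symbols"
begin

text \<open>Polya trees: unlabeled rooted non-plane trees (children form a multiset).\<close>
datatype ptree = Node "ptree multiset"

primrec psize :: "ptree \<Rightarrow> nat" where
  "psize (Node ts) = 1 + sum_mset (image_mset psize ts)"

definition polya_le :: "nat \<Rightarrow> ptree set" where
  "polya_le n = {t. psize t \<le> n}"

definition polya_sigma :: real where
  "polya_sigma = real_of_ereal (conv_radius (\<lambda>n. real (card {t. psize t = n})))"

datatype ltree = LNode nat "ltree multiset"

primrec lsize :: "ltree \<Rightarrow> nat" where
  "lsize (LNode a ts) = 1 + sum_mset (image_mset lsize ts)"

primrec labels :: "ltree \<Rightarrow> nat set" where
  "labels (LNode a ts) = insert a (\<Union> (set_mset (image_mset labels ts)))"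

primrec increasing :: "ltree \<Rightarrow> bool" where
  "increasing (LNode a ts) =
     ((\<forall>s\<in>#ts. \<forall>b\<in>labels s. a < b) \<and> (\<forall>x\<in>#image_mset increasing ts. x))"

primrec shape :: "ltree \<Rightarrow> ptree" where
  "shape (LNode a ts) = Node (image_mset shape ts)"

primrec fringes :: "ltree \<Rightarrow> ltree set" where
  "fringes (LNode a ts) = insert (LNode a ts) (\<Union> (set_mset (image_mset fringes ts)))"

definition rec_trees :: "nat \<Rightarrow> ltree set" where
  "rec_trees n = {r. lsize r = n \<and> labels r = {1..n} \<and> increasing r}"

text \<open>[z^n] T(z): coefficient of the EGF of recursive trees.\<close>
definition T_coeff :: "nat \<Rightarrow> real" where
  "T_coeff n = real (card (rec_trees n)) / fact n"

text \<open>[z^n] S_t(z): coefficient of the EGF of recursive trees having no fringe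
  subtree of shape t.\<close>
definition S_coeff :: "ptree \<Rightarrow> nat \<Rightarrow> real" where
  "S_coeff t n = real (card {r \<in> rec_trees n. \<forall>s\<in>fringes r. shape s \<noteq> t}) / fact n"

end

theory Submission
  imports Defs "HOL-Combinatorics.Multiset_Permutations" "HOL-Real_Asymp.Real_Asymp"
begin

function forest :: "nat list \<Rightarrow> ltree list" where
  "forest [] = []"
| "forest (c # xs) = LNode c (mset (forest (takeWhile (\<lambda>y. c < y) xs))) # forest (dropWhile (\<lambda>y. c < y) xs)"
  by pat_completeness auto
termination
  by (relation "Wellfounded.measure length") (simp_all add: less_Suc_eq_le length_takeWhile_le length_dropWhile_le)

lemma tw_dw_len: "length (takeWhile P xs) + length (dropWhile P xs) = length xs"
  by (induct xs) auto

lemma tw_dw_set: "set (takeWhile P xs) \<union> set (dropWhile P xs) = set xs"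
  by (induct xs) auto

lemma sum_mset_image_mset_list: "sum_mset (image_mset f (mset xs)) = sum_list (map f xs)"
  by (induct xs) auto

primrec lroot :: "ltree \<Rightarrow> nat" where "lroot (LNode a ts) = a"

lemma forest_lsize: "(\<Sum>t\<leftarrow>forest xs. lsize t) = length xs"
proof (induction xs rule: forest.induct)
  case (2 c xs)
  have "length (takeWhile (\<lambda>y. c < y) xs) + length (dropWhile (\<lambda>y. c < y) xs) = length xs"
    by (rule tw_dw_len)
  then show ?case using 2 by (simp add: sum_mset_image_mset_list)
qed simp

lemma forest_labels: "(\<Union>t\<in>set (forest xs). labels t) = set xs"
proof (induction xs rule: forest.induct)
  case (2 c xs)
  have "set (takeWhile (\<lambda>y. c < y) xs) \<union> set (dropWhile (\<lambda>y. c < y) xs) = set xs"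
    by (rule tw_dw_set)
  then show ?case using 2 by auto
qed simp

lemma forest_incr: "t \<in> set (forest xs) \<Longrightarrow> increasing t"
proof (induction xs arbitrary: t rule: forest.induct)
  case (2 c xs)
  let ?B = "takeWhile (\<lambda>y. c < y) xs"
  have lab: "\<forall>s\<in>set (forest ?B). \<forall>b\<in>labels s. c < b"
    using forest_labels[of ?B] by (auto dest: set_takeWhileD)
  from 2 show ?case using lab by auto
qed simp

lemma forest_hd: "xs \<noteq> [] \<Longrightarrow> forest xs \<noteq> [] \<and> lroot (hd (forest xs)) = hd xs"
  by (cases xs) auto

lemma forest_roots: "t \<in> set (forest xs) \<Longrightarrow> distinct xs \<Longrightarrow> lroot t \<in> set xs \<and> lroot t \<le> hd xs"
proof (induction xs arbitrary: t rule: forest.induct)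
  case (2 c xs)
  let ?R = "dropWhile (\<lambda>y. c < y) xs"
  show ?case
  proof (cases "t \<in> set (forest ?R)")
    case True
    have d: "distinct ?R" using 2(4) by simp
    have "lroot t \<in> set ?R \<and> lroot t \<le> hd ?R" using 2(2)[OF True d] .
    moreover have "?R \<noteq> []" using True by (metis empty_iff forest.simps(1) list.set(1))
    moreover then have "\<not> c < hd ?R" using hd_dropWhile by blast
    ultimately show ?thesis by (auto dest: set_dropWhileD)
  next
    case False
    then show ?thesis using 2(3,4) by auto
  qed
qed simp


lemma forest_Nil_iff: "forest xs = [] \<longleftrightarrow> xs = []"
  by (cases xs) auto

lemma forest_drop_roots:
  assumes "distinct (c # xs)" "t \<in> set (forest (dropWhile (\<lambda>y. c < y) xs))"
  shows "lroot t < c"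
proof -
  let ?R = "dropWhile (\<lambda>y. c < y) xs"
  have d: "distinct ?R" using assms(1) by simp
  have r: "lroot t \<in> set ?R \<and> lroot t \<le> hd ?R" using forest_roots[OF assms(2) d] .
  have ne: "?R \<noteq> []" using assms(2) by (metis empty_iff forest.simps(1) list.set(1))
  then have "\<not> c < hd ?R" using hd_dropWhile by blast
  moreover have "hd ?R \<in> set xs" using ne by (metis hd_in_set set_dropWhileD)
  moreover have "c \<notin> set xs" using assms(1) by simp
  ultimately have "hd ?R < c" by (metis nat_neq_iff)
  then show ?thesis using r by simp
qed

lemma forest_inj:
  "distinct xs \<Longrightarrow> distinct ys \<Longrightarrow> mset (forest xs) = mset (forest ys) \<Longrightarrow> xs = ys"
proof (induction "length xs" arbitrary: xs ys rule: less_induct)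
  case less
  show ?case
  proof (cases xs)
    case Nil
    then have "forest ys = []" using less.prems(3) by simp
    then show ?thesis using Nil by (simp add: forest_Nil_iff)
  next
    case (Cons c xs')
    then have "forest ys \<noteq> []" using less.prems(3) by (metis forest_Nil_iff list.distinct(1) mset_zero_iff)
    then obtain c' ys' where ys: "ys = c' # ys'" by (cases ys) auto
    define B where "B = takeWhile (\<lambda>y. c < y) xs'"
    define R where "R = dropWhile (\<lambda>y. c < y) xs'"
    define B' where "B' = takeWhile (\<lambda>y. c' < y) ys'"
    define R' where "R' = dropWhile (\<lambda>y. c' < y) ys'"
    define T where "T = LNode c (mset (forest B))"
    define T' where "T' = LNode c' (mset (forest B'))"
    have fx: "forest xs = T # forest R" using Cons by (simp add: T_def B_def R_def)
    have fy: "forest ys = T' # forest R'" using ys by (simp add: T'_def B'_def R'_def)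
    have rx: "\<And>t. t \<in> set (forest R) \<Longrightarrow> lroot t < c"
      using forest_drop_roots less.prems(1) Cons R_def by blast
    have ry: "\<And>t. t \<in> set (forest R') \<Longrightarrow> lroot t < c'"
      using forest_drop_roots less.prems(2) ys R'_def by blast
    have se: "set (forest xs) = set (forest ys)" using less.prems(3) by (metis set_mset_mset)
    have "T \<in> set (forest ys)" using fx se by auto
    then have "c \<le> c'" using fy ry by (auto simp: T_def T'_def dest: ry)
    moreover have "T' \<in> set (forest xs)" using fy se by auto
    then have "c' \<le> c" using fx rx by (auto simp: T_def T'_def dest: rx)
    ultimately have cc: "c = c'" by simp
    have "T = T'"
    proof (rule ccontr)
      assume "T \<noteq> T'"
      then have "T \<in> set (forest R')" using \<open>T \<in> set (forest ys)\<close> fy by auto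
      then show False using ry cc by (fastforce simp: T_def)
    qed
    then have mB: "mset (forest B) = mset (forest B')" by (simp add: T_def T'_def)
    have dB: "distinct B" "distinct B'" using less.prems(1,2) Cons ys B_def B'_def
      by (auto intro: distinct_takeWhile)
    have lB: "length B < length xs" using Cons B_def by (simp add: less_Suc_eq_le length_takeWhile_le)
    have BB: "B = B'" using less.hyps[OF lB dB mB] .
    have mR: "mset (forest R) = mset (forest R')"
      using less.prems(3) fx fy \<open>T = T'\<close> by simp
    have dR: "distinct R" "distinct R'" using less.prems(1,2) Cons ys R_def R'_def by auto
    have lR: "length R < length xs" using Cons R_def by (simp add: less_Suc_eq_le length_dropWhile_le)
    have RR: "R = R'" using less.hyps[OF lR dR mR] .
    have "xs = c # B @ R" using Cons B_def R_def by simp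
    moreover have "ys = c' # B' @ R'" using ys B'_def R'_def by simp
    ultimately show ?thesis using cc BB RR by simp
  qed
qed


primrec labm :: "ltree \<Rightarrow> nat multiset" where
  "labm (LNode a ts) = add_mset a (sum_mset (image_mset labm ts))"

lemma set_labm: "set_mset (labm t) = labels t"
  by (induction t) auto

lemma size_labm: "size (labm t) = lsize t"
proof (induction t)
  case (LNode a ts)
  have "size (sum_mset (image_mset labm ts)) = sum_mset (image_mset lsize ts)"
    using LNode by (induction ts) auto
  then show ?case by simp
qed

definition dm :: "'a multiset \<Rightarrow> bool" where "dm M \<longleftrightarrow> (\<forall>x. count M x \<le> 1)"

lemma dm_plus: "dm (A + B) \<longleftrightarrow> dm A \<and> dm B \<and> set_mset A \<inter> set_mset B = {}"
proof
  assume h: "dm (A + B)"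
  have c: "count A x + count B x \<le> 1" for x using h unfolding dm_def by (metis count_union)
  have "dm A" unfolding dm_def using c by (meson add_leE)
  moreover have "dm B" unfolding dm_def using c by (meson add_leE)
  moreover have "set_mset A \<inter> set_mset B = {}"
  proof (rule ccontr)
    assume "set_mset A \<inter> set_mset B \<noteq> {}"
    then obtain x where "count A x \<ge> 1" "count B x \<ge> 1" by auto
    with c[of x] show False by simp
  qed
  ultimately show "dm A \<and> dm B \<and> set_mset A \<inter> set_mset B = {}" by blast
next
  assume h: "dm A \<and> dm B \<and> set_mset A \<inter> set_mset B = {}"
  show "dm (A + B)" unfolding dm_def
  proof
    fix x
    show "count (A + B) x \<le> 1"
    proof (cases "x \<in># A")
      case True
      then have "count B x = 0" using h by (auto simp: count_eq_zero_iff)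
      then show ?thesis using h by (simp add: dm_def)
    next
      case False
      then have "count A x = 0" by (simp add: count_eq_zero_iff)
      then show ?thesis using h by (simp add: dm_def)
    qed
  qed
qed

lemma dm_add_mset: "dm (add_mset a A) \<longleftrightarrow> a \<notin># A \<and> dm A"
proof -
  have "dm {#a#}" unfolding dm_def by simp
  then show ?thesis using dm_plus[of "{#a#}" A] by auto
qed

lemma lsize_pos: "lsize t \<ge> 1"
  by (cases t) auto

lemma forest_surj:
  "(\<Sum>t\<in>#F. lsize t) = m \<Longrightarrow> (\<forall>t\<in>#F. increasing t) \<Longrightarrow> dm (\<Sum>t\<in>#F. labm t) \<Longrightarrow>
   \<exists>xs. distinct xs \<and> set xs = (\<Union>t\<in>set_mset F. labels t) \<and> mset (forest xs) = F"
proof (induction m arbitrary: F rule: less_induct)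
  case (less m)
  show ?case
  proof (cases "F = {#}")
    case True
    then show ?thesis by (intro exI[of _ "[]"]) simp
  next
    case False
    define c where "c = Max (lroot ` set_mset F)"
    have fin: "finite (lroot ` set_mset F)" by simp
    have ne: "lroot ` set_mset F \<noteq> {}" using False by simp
    have "c \<in> lroot ` set_mset F" using Max_in[OF fin ne] c_def by simp
    then obtain t where tF: "t \<in># F" and tc: "lroot t = c" by auto
    have maxc: "\<And>s. s \<in># F \<Longrightarrow> lroot s \<le> c" using c_def fin by simp
    obtain C where t: "t = LNode c C" using tc by (cases t) auto
    define F' where "F' = F - {#t#}"
    have F: "F = add_mset t F'" using tF F'_def by simp
    have szF: "m = lsize t + (\<Sum>s\<in>#F'. lsize s)" using less.prems(1) F by simp
    have szt: "lsize t = 1 + (\<Sum>s\<in>#C. lsize s)" using t by simp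
    have lt1: "(\<Sum>s\<in>#C. lsize s) < m" using szF szt by simp
    have lt2: "(\<Sum>s\<in>#F'. lsize s) < m" using szF lsize_pos[of t] by simp
    have it: "increasing t" using less.prems(2) tF by blast
    have incC: "\<forall>s\<in>#C. increasing s" using it t by auto
    have gtC: "\<forall>s\<in>#C. \<forall>b\<in>labels s. c < b" using it t by auto
    have incF': "\<forall>s\<in>#F'. increasing s" using less.prems(2) F by simp
    have dmF: "dm (labm t + (\<Sum>s\<in>#F'. labm s))" using less.prems(3) F by simp
    then have dmt: "dm (labm t)" and dmF': "dm (\<Sum>s\<in>#F'. labm s)"
      and disj: "set_mset (labm t) \<inter> set_mset (\<Sum>s\<in>#F'. labm s) = {}"
      by (simp_all add: dm_plus)
    have labt: "labm t = add_mset c (\<Sum>s\<in>#C. labm s)" using t by simp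
    have dmC: "dm (\<Sum>s\<in>#C. labm s)" and cC: "c \<notin># (\<Sum>s\<in>#C. labm s)"
      using dmt labt by (simp_all add: dm_add_mset)
    obtain B where B: "distinct B" "set B = (\<Union>s\<in>set_mset C. labels s)" "mset (forest B) = C"
      using less.IH[OF lt1 refl incC dmC] by blast
    obtain R where R: "distinct R" "set R = (\<Union>s\<in>set_mset F'. labels s)" "mset (forest R) = F'"
      using less.IH[OF lt2 refl incF' dmF'] by blast
    have setB: "set B = set_mset (\<Sum>s\<in>#C. labm s)" using B(2) by (simp add: set_labm)
    have setR: "set R = set_mset (\<Sum>s\<in>#F'. labm s)" using R(2) by (simp add: set_labm)
    have Bgt: "\<forall>y\<in>set B. c < y" using B(2) gtC by auto
    have cB: "c \<notin> set B" using setB cC by simp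
    have cR: "c \<notin> set R" using setR disj labt by auto
    have BR: "set B \<inter> set R = {}" using setB setR disj labt by auto
    have Rhd: "\<not> c < hd R" if "R \<noteq> []"
    proof -
      have "hd (forest R) \<in> set (forest R)" using that by (simp add: forest_Nil_iff)
      then have "hd (forest R) \<in># F'" using R(3) by (metis set_mset_mset)
      then have "hd (forest R) \<in># F" using F by simp
      then have "lroot (hd (forest R)) \<le> c" using maxc by simp
      then show ?thesis using forest_hd[OF that] by simp
    qed
    have tw: "takeWhile (\<lambda>y. c < y) (B @ R) = B"
    proof (cases R)
      case Nil then show ?thesis using Bgt by simp
    next
      case (Cons r R1)
      then show ?thesis using Bgt Rhd by simp
    qed
    have dw: "dropWhile (\<lambda>y. c < y) (B @ R) = R"
    proof (cases R)
      case Nil then show ?thesis using Bgt by simp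
    next
      case (Cons r R1)
      then show ?thesis using Bgt Rhd by simp
    qed
    have "forest (c # B @ R) = LNode c (mset (forest B)) # forest R"
      using tw dw by simp
    then have "mset (forest (c # B @ R)) = F" using B(3) R(3) F t by simp
    moreover have "distinct (c # B @ R)" using B(1) R(1) cB cR BR by simp
    moreover have "set (c # B @ R) = (\<Union>t\<in>set_mset F. labels t)"
      using B(2) R(2) F t by auto
    ultimately show ?thesis by blast
  qed
qed

lemma card_set_mset_le: "card (set_mset M) \<le> size M"
proof (induction M)
  case (add x M)
  have "card (set_mset (add_mset x M)) \<le> card (set_mset M) + 1"
    by (simp add: card_insert_le_m1 card_insert_if)
  then show ?case using add by simp
qed simp

lemma dm_of_card: "size M = card (set_mset M) \<Longrightarrow> dm M"
proof (induction M)
  case empty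
  then show ?case by (simp add: dm_def)
next
  case (add x M)
  have xM: "x \<notin># M"
  proof
    assume "x \<in># M"
    then have "set_mset (add_mset x M) = set_mset M" by auto
    then show False using add.prems card_set_mset_le[of M] by simp
  qed
  then have "size M = card (set_mset M)" using add.prems by simp
  then show ?case using add.IH xM by (simp add: dm_add_mset)
qed

definition Phi :: "nat list \<Rightarrow> ltree" where
  "Phi xs = LNode 1 (mset (forest xs))"

lemma Phi_in:
  assumes "xs \<in> permutations_of_set {2..n}" "n \<ge> 1"
  shows "Phi xs \<in> rec_trees n"
proof -
  have d: "distinct xs" and s: "set xs = {2..n}" using assms(1) by (auto simp: permutations_of_set_def)
  have l: "length xs = n - 1" using distinct_card[OF d] s by simp
  have "lsize (Phi xs) = n"
    using forest_lsize[of xs] l assms(2) by (simp add: Phi_def sum_mset_image_mset_list)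
  moreover have "labels (Phi xs) = {1..n}"
    using forest_labels[of xs] s assms(2) by (auto simp: Phi_def)
  moreover have "increasing (Phi xs)"
  proof -
    have "\<forall>s\<in>set (forest xs). \<forall>x\<in>labels s. 1 < x"
    proof (intro ballI)
      fix s x assume "s \<in> set (forest xs)" "x \<in> labels s"
      then have "x \<in> set xs" using forest_labels[of xs] by blast
      then show "1 < x" using s by simp
    qed
    then show ?thesis using forest_incr[of _ xs] by (auto simp: Phi_def)
  qed
  ultimately show ?thesis by (simp add: rec_trees_def)
qed

lemma Phi_inj: "inj_on Phi (permutations_of_set A)"
  by (rule inj_onI) (auto simp: Phi_def permutations_of_set_def intro: forest_inj)

lemma Phi_surj:
  assumes "r \<in> rec_trees n"
  shows "\<exists>xs\<in>permutations_of_set {2..n}. Phi xs = r"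
proof -
  obtain a C where r: "r = LNode a C" by (cases r)
  have sz: "lsize r = n" and lab: "labels r = {1..n}" and inc: "increasing r"
    using assms by (auto simp: rec_trees_def)
  have "size (labm r) = card (set_mset (labm r))" using sz lab by (simp add: size_labm set_labm)
  then have dmr: "dm (labm r)" by (rule dm_of_card)
  have gt: "\<forall>s\<in>#C. \<forall>b\<in>labels s. a < b" using inc r by simp
  have incC: "\<forall>s\<in>#C. increasing s" using inc r by auto
  have "a \<in> {1..n}" using lab r by auto
  have a1: "a = 1"
  proof (rule ccontr)
    assume "a \<noteq> 1"
    have "1 \<in> labels r" using lab \<open>a \<in> {1..n}\<close> by auto
    then obtain s b where "s \<in># C" "b \<in> labels s" "b = 1" using r \<open>a \<noteq> 1\<close> by auto
    then show False using gt \<open>a \<in> {1..n}\<close> by fastforce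
  qed
  have dmC: "dm (\<Sum>s\<in>#C. labm s)" using dmr r by (simp add: dm_add_mset)
  have szC: "(\<Sum>s\<in>#C. lsize s) = n - 1" using sz r by simp
  obtain xs where xs: "distinct xs" "set xs = (\<Union>t\<in>set_mset C. labels t)" "mset (forest xs) = C"
    using forest_surj[OF szC incC dmC] by blast
  have "insert 1 (\<Union>t\<in>set_mset C. labels t) = {1..n}" using lab r a1 by simp
  moreover have "1 \<notin> (\<Union>t\<in>set_mset C. labels t)" using gt a1 by auto
  ultimately have "(\<Union>t\<in>set_mset C. labels t) = {1..n} - {1}" by blast
  also have "{1..n} - {1} = {2..n}" by auto
  finally have "(\<Union>t\<in>set_mset C. labels t) = {2..n}" .
  then have "xs \<in> permutations_of_set {2..n}" using xs by (simp add: permutations_of_set_def)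
  moreover have "Phi xs = r" using xs(3) r a1 by (simp add: Phi_def)
  ultimately show ?thesis by blast
qed

lemma Phi_bij:
  assumes "n \<ge> 1"
  shows "bij_betw Phi (permutations_of_set {2..n}) (rec_trees n)"
  unfolding bij_betw_def
  using Phi_inj Phi_in[OF _ assms] Phi_surj by blast

lemma forest_fringe:
  "distinct xs \<Longrightarrow> a < length xs \<Longrightarrow>
   LNode (xs!a) (mset (forest (takeWhile (\<lambda>y. xs!a < y) (drop (Suc a) xs)))) \<in> (\<Union>t\<in>set (forest xs). fringes t)"
proof (induction "length xs" arbitrary: xs a rule: less_induct)
  case less
  obtain c xs' where xs: "xs = c # xs'" using less.prems(2) by (cases xs) auto
  define B where "B = takeWhile (\<lambda>y. c < y) xs'"
  define R where "R = dropWhile (\<lambda>y. c < y) xs'"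
  define T where "T = LNode c (mset (forest B))"
  have fx: "forest xs = T # forest R" using xs by (simp add: T_def B_def R_def)
  have xs': "xs' = B @ R" using B_def R_def by simp
  have dB: "distinct B" and dR: "distinct R" using less.prems(1) xs xs' by auto
  have Bgt: "\<forall>y\<in>set B. c < y" using B_def by (auto dest: set_takeWhileD)
  have Rhd: "\<not> c < hd R" if "R \<noteq> []" using that R_def hd_dropWhile by blast
  have fT: "fringes T = insert T (\<Union>t\<in>set (forest B). fringes t)" by (simp add: T_def)
  show ?case
  proof (cases a)
    case 0
    then show ?thesis using xs fx by (simp add: T_def B_def)
  next
    case (Suc a')
    then have a': "a' < length B + length R" using less.prems(2) xs xs' by simp
    show ?thesis
    proof (cases "a' < length B")
      case True
      let ?x = "B ! a'"
      have nth: "xs ! a = ?x" using xs xs' Suc True by (simp add: nth_append)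
      have xB: "?x \<in> set B" using True by simp
      have dr: "drop (Suc a) xs = drop (Suc a') B @ R" using xs xs' Suc True by simp
      have twR: "takeWhile (\<lambda>y. ?x < y) R = []"
      proof (cases R)
        case (Cons r R1)
        then have "\<not> c < r" using Rhd by simp
        then show ?thesis using Cons Bgt xB by auto
      qed simp
      have tw: "takeWhile (\<lambda>y. ?x < y) (drop (Suc a) xs) = takeWhile (\<lambda>y. ?x < y) (drop (Suc a') B)"
      proof (cases "\<forall>y\<in>set (drop (Suc a') B). ?x < y")
        case True
        then have "takeWhile (\<lambda>y. ?x < y) (drop (Suc a') B) = drop (Suc a') B"
          by (simp add: takeWhile_eq_all_conv)
        then show ?thesis using dr twR True by (simp add: takeWhile_append) (rule sym, simp add: takeWhile_eq_all_conv)
      next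
        case False
        then show ?thesis using dr by (auto simp: takeWhile_append)
      qed
      have lB: "length B < length xs" using xs xs' by simp
      have "LNode ?x (mset (forest (takeWhile (\<lambda>y. ?x < y) (drop (Suc a') B)))) \<in> (\<Union>t\<in>set (forest B). fringes t)"
        using less.hyps[OF lB dB True] .
      then show ?thesis using nth tw fx fT by auto
    next
      case False
      let ?i = "a' - length B"
      have i: "?i < length R" using a' False by simp
      have nth: "xs ! a = R ! ?i" using xs xs' Suc False by (simp add: nth_append)
      have dr: "drop (Suc a) xs = drop (Suc ?i) R" using xs xs' Suc False
        by (simp add: Suc_diff_le)
      have lR: "length R < length xs" using xs xs' by simp
      have "LNode (R ! ?i) (mset (forest (takeWhile (\<lambda>y. R ! ?i < y) (drop (Suc ?i) R)))) \<in> (\<Union>t\<in>set (forest R). fringes t)"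
        using less.hyps[OF lR dR i] .
      then show ?thesis using nth dr fx by auto
    qed
  qed
qed

definition Wev :: "nat list \<Rightarrow> nat \<Rightarrow> nat \<Rightarrow> bool" where
  "Wev xs a k \<longleftrightarrow> (\<forall>j\<in>{a..a+k}. xs!(a+k) \<le> xs!j) \<and> (\<forall>j\<in>{a..<a+k}. xs!a \<le> xs!j)"

lemma Wev_tw:
  assumes d: "distinct xs" and ak: "a + k < length xs" and k: "k \<ge> 1" and W: "Wev xs a k"
  shows "length (takeWhile (\<lambda>y. xs!a < y) (drop (Suc a) xs)) = k - 1"
proof -
  let ?P = "\<lambda>y. xs!a < y"
  define T where "T = take (k - 1) (drop (Suc a) xs)"
  define D where "D = drop (a + k) xs"
  have "D = drop (k - 1) (drop (Suc a) xs)" using k by (simp add: D_def add.commute)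
  then have split: "drop (Suc a) xs = T @ D" by (simp only: T_def append_take_drop_id)
  have all: "\<forall>y\<in>set T. ?P y"
  proof
    fix y assume "y \<in> set T"
    then obtain i where i: "i < length T" "y = T ! i"
      by (auto simp: in_set_conv_nth)
    have ik: "i < k - 1" using i(1) by (simp add: T_def)
    have y: "y = xs ! (Suc a + i)" using i ak ik by (simp add: T_def)
    have "xs!a \<le> y" using W ik y unfolding Wev_def by auto
    moreover have "xs!a \<noteq> y" using y d ak ik by (simp add: nth_eq_iff_index_eq)
    ultimately show "?P y" by simp
  qed
  have hd: "D = xs!(a+k) # drop (Suc (a + k)) xs" using ak by (simp add: D_def Cons_nth_drop_Suc)
  have "xs!(a+k) \<le> xs!a" using W unfolding Wev_def by auto
  then have np: "\<not> ?P (xs!(a+k))" by simp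
  have "takeWhile ?P (T @ D) = T @ takeWhile ?P D"
    by (rule takeWhile_append2) (use all in blast)
  moreover have "takeWhile ?P D = []" using hd np by simp
  ultimately have "takeWhile ?P (drop (Suc a) xs) = T" using split by simp
  then show ?thesis using ak k by (simp add: T_def)
qed

lemma Wev_fringe:
  assumes "xs \<in> permutations_of_set {2..n}" "a + k < length xs" "k \<ge> 1" "Wev xs a k"
  shows "\<exists>s\<in>fringes (Phi xs). lsize s = k"
proof -
  have d: "distinct xs" using assms(1) by (simp add: permutations_of_set_def)
  let ?s = "LNode (xs!a) (mset (forest (takeWhile (\<lambda>y. xs!a < y) (drop (Suc a) xs))))"
  have "?s \<in> fringes (Phi xs)" using forest_fringe[OF d, of a] assms(2) by (simp add: Phi_def)
  moreover have "lsize ?s = k"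
    using Wev_tw[OF d assms(2-4)] assms(3) forest_lsize by (simp add: sum_mset_image_mset_list)
  ultimately show ?thesis by blast
qed

definition swp :: "nat \<Rightarrow> nat \<Rightarrow> nat list \<Rightarrow> nat list" where
  "swp i j xs = xs[j := xs!i, i := xs!j]"

lemma swp_length [simp]: "length (swp i j xs) = length xs"
  by (simp add: swp_def)

lemma swp_nth: "i < length xs \<Longrightarrow> j < length xs \<Longrightarrow> l < length xs \<Longrightarrow>
  swp i j xs ! l = (if l = i then xs!j else if l = j then xs!i else xs!l)"
  by (auto simp: swp_def nth_list_update)

lemma swp_mset: "i < length xs \<Longrightarrow> j < length xs \<Longrightarrow> mset (swp i j xs) = mset xs"
  unfolding swp_def by (rule mset_swap)

lemma swp_invol: "i < length xs \<Longrightarrow> j < length xs \<Longrightarrow> swp i j (swp i j xs) = xs"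
  by (rule nth_equalityI) (auto simp: swp_nth)

lemma swp_perm: "xs \<in> permutations_of_set V \<Longrightarrow> i < length xs \<Longrightarrow> j < length xs \<Longrightarrow>
  swp i j xs \<in> permutations_of_set V"
  using swp_mset[of i xs j] mset_eq_imp_distinct_iff[of "swp i j xs" xs]
  by (auto simp: permutations_of_set_def dest: mset_eq_setD)

lemma card_filter_sum: "finite Y \<Longrightarrow> real (card {y\<in>Y. Q y}) = (\<Sum>y\<in>Y. if Q y then 1 else 0)"
  by (simp add: sum.If_cases Int_def)

lemma orbit_count:
  fixes g :: "'i \<Rightarrow> 'a \<Rightarrow> 'a"
  assumes fY: "finite Y" and fG: "finite G"
    and cl: "\<And>i y. i \<in> G \<Longrightarrow> y \<in> Y \<Longrightarrow> g i y \<in> Y"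
    and inv: "\<And>i y. i \<in> G \<Longrightarrow> y \<in> Y \<Longrightarrow> g i (g i y) = y"
    and one: "\<And>y. y \<in> Y \<Longrightarrow> card {i\<in>G. P (g i y)} = 1"
  shows "card G * card {y\<in>Y. P y} = card Y"
proof -
  have eq: "card {y\<in>Y. P (g i y)} = card {y\<in>Y. P y}" if i: "i \<in> G" for i
  proof -
    have "bij_betw (g i) {y\<in>Y. P (g i y)} {y\<in>Y. P y}"
    proof (rule bij_betw_byWitness[where f' = "g i"])
      show "\<forall>a\<in>{y \<in> Y. P (g i y)}. g i (g i a) = a" using inv i by blast
      show "\<forall>a'\<in>{y \<in> Y. P y}. g i (g i a') = a'" using inv i by blast
      show "g i ` {y \<in> Y. P (g i y)} \<subseteq> {y \<in> Y. P y}" using cl i by blast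
      show "g i ` {y \<in> Y. P y} \<subseteq> {y \<in> Y. P (g i y)}" using cl inv i by auto
    qed
    then show ?thesis by (rule bij_betw_same_card)
  qed
  have "real (card G * card {y\<in>Y. P y}) = (\<Sum>i\<in>G. real (card {y\<in>Y. P (g i y)}))"
    using eq by simp
  also have "\<dots> = (\<Sum>i\<in>G. \<Sum>y\<in>Y. if P (g i y) then 1 else 0)"
    using card_filter_sum[OF fY] by simp
  also have "\<dots> = (\<Sum>y\<in>Y. \<Sum>i\<in>G. if P (g i y) then 1 else 0)"
    by (rule sum.swap)
  also have "\<dots> = (\<Sum>y\<in>Y. real (card {i\<in>G. P (g i y)}))"
    using card_filter_sum[OF fG] by simp
  also have "\<dots> = real (card Y)" using one by simp
  finally show ?thesis by linarith
qed

lemma argmin_unique: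
  fixes xs :: "nat list"
  assumes d: "distinct xs" and G: "finite G" "G \<noteq> {}" "\<forall>j\<in>G. j < length xs"
  shows "card {i\<in>G. \<forall>j\<in>G. xs!i \<le> xs!j} = 1"
proof -
  have fin: "finite ((!) xs ` G)" using G by simp
  have ne: "(!) xs ` G \<noteq> {}" using G by simp
  obtain i0 where i0: "i0 \<in> G" "xs!i0 = Min ((!) xs ` G)" using Min_in[OF fin ne] by auto
  have "{i\<in>G. \<forall>j\<in>G. xs!i \<le> xs!j} = {i0}"
  proof
    show "{i\<in>G. \<forall>j\<in>G. xs!i \<le> xs!j} \<subseteq> {i0}"
    proof
      fix i assume i: "i \<in> {i\<in>G. \<forall>j\<in>G. xs!i \<le> xs!j}"
      then have "xs!i \<le> xs!i0" using i0 by auto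
      moreover have "xs!i0 \<le> xs!i" using i0 fin i by simp
      ultimately have "xs!i = xs!i0" by simp
      moreover have "i < length xs" "i0 < length xs" using i i0 G(3) by auto
      ultimately show "i \<in> {i0}" using d nth_eq_iff_index_eq[of xs i i0] by simp
    qed
    show "{i0} \<subseteq> {i\<in>G. \<forall>j\<in>G. xs!i \<le> xs!j}" using i0 fin by simp
  qed
  then show ?thesis by simp
qed

lemma min_pos_count:
  assumes fY: "finite Y" and Yd: "\<And>xs. xs \<in> Y \<Longrightarrow> distinct xs \<and> length xs = N"
    and G: "finite G" "G \<noteq> {}" "\<forall>j\<in>G. j < N" and p: "p \<in> G"
    and cl: "\<And>i xs. i \<in> G \<Longrightarrow> xs \<in> Y \<Longrightarrow> swp p i xs \<in> Y"
  shows "card G * card {xs\<in>Y. \<forall>j\<in>G. xs!p \<le> xs!j} = card Y"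
proof (rule orbit_count[OF fY G(1), where g = "\<lambda>i. swp p i" and P = "\<lambda>ys. \<forall>j\<in>G. ys!p \<le> ys!j"])
  show "\<And>i y. i \<in> G \<Longrightarrow> y \<in> Y \<Longrightarrow> swp p i y \<in> Y" by (rule cl)
  show "\<And>i y. i \<in> G \<Longrightarrow> y \<in> Y \<Longrightarrow> swp p i (swp p i y) = y"
    using Yd G(3) p by (auto intro: swp_invol)
  fix xs assume xs: "xs \<in> Y"
  have d: "distinct xs" and l: "length xs = N" using Yd[OF xs] by auto
  have "{i\<in>G. \<forall>j\<in>G. swp p i xs ! p \<le> swp p i xs ! j} = {i\<in>G. \<forall>j\<in>G. xs!i \<le> xs!j}"
  proof (rule Collect_cong, rule conj_cong[OF refl])
    fix i assume i: "i \<in> G"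
    have lt: "i < length xs" "p < length xs" using i p G(3) l by auto
    have sp: "swp p i xs ! p = xs ! i" using lt by (simp add: swp_nth)
    have sj: "\<And>j. j \<in> G \<Longrightarrow> swp p i xs ! j = (if j = p then xs!i else if j = i then xs!p else xs!j)"
      using lt G(3) l by (simp add: swp_nth)
    show "(\<forall>j\<in>G. swp p i xs ! p \<le> swp p i xs ! j) = (\<forall>j\<in>G. xs!i \<le> xs!j)"
    proof
      assume h: "\<forall>j\<in>G. swp p i xs ! p \<le> swp p i xs ! j"
      show "\<forall>j\<in>G. xs!i \<le> xs!j"
      proof
        fix j assume j: "j \<in> G"
        show "xs!i \<le> xs!j"
        proof (cases "j = i")
          case True then show ?thesis by simp
        next
          case False
          show ?thesis
          proof (cases "j = p")
            case True
            have "xs!i \<le> swp p i xs ! i" using h i sp by auto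
            then show ?thesis using sj[OF i] True False by (auto split: if_splits)
          next
            case False
            then show ?thesis using h j sp sj[OF j] \<open>j \<noteq> i\<close> by auto
          qed
        qed
      qed
    next
      assume h: "\<forall>j\<in>G. xs!i \<le> xs!j"
      show "\<forall>j\<in>G. swp p i xs ! p \<le> swp p i xs ! j"
        using h sp sj p i by auto
    qed
  qed
  then show "card {i\<in>G. \<forall>j\<in>G. swp p i xs ! p \<le> swp p i xs ! j} = 1"
    using argmin_unique[OF d G(1,2)] G(3) l by simp
qed

lemma Wev_local: "(\<And>l. l \<in> {a..a+k} \<Longrightarrow> ys!l = xs!l) \<Longrightarrow> Wev ys a k = Wev xs a k"
  unfolding Wev_def by auto

lemma Wev_count:
  assumes fY: "finite Y" and Yd: "\<And>xs. xs \<in> Y \<Longrightarrow> distinct xs \<and> length xs = N"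
    and bk: "b + k < N" and k: "k \<ge> 1"
    and cl1: "\<And>i xs. i \<in> {b..b+k} \<Longrightarrow> xs \<in> Y \<Longrightarrow> swp (b+k) i xs \<in> Y"
    and cl2: "\<And>i xs. i \<in> {b..<b+k} \<Longrightarrow> xs \<in> Y \<Longrightarrow> swp b i xs \<in> Y"
  shows "k * (k + 1) * card {xs\<in>Y. Wev xs b k} = card Y"
proof -
  define Y1 where "Y1 = {xs\<in>Y. \<forall>j\<in>{b..b+k}. xs!(b+k) \<le> xs!j}"
  have h1: "card {b..b+k} * card Y1 = card Y"
    unfolding Y1_def
    by (rule min_pos_count[OF fY Yd, of "{b..b+k}" "b+k"]) (use bk cl1 in auto)
  have Y1d: "\<And>xs. xs \<in> Y1 \<Longrightarrow> distinct xs \<and> length xs = N" using Yd Y1_def by auto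
  have cl: "swp b i xs \<in> Y1" if i: "i \<in> {b..<b+k}" and xs: "xs \<in> Y1" for i xs
  proof -
    have inY: "swp b i xs \<in> Y" using cl2 i xs Y1_def by auto
    have l: "length xs = N" using Y1d xs by auto
    have E: "\<forall>j\<in>{b..b+k}. xs!(b+k) \<le> xs!j" using xs Y1_def by auto
    have lt: "b < length xs" "i < length xs" using i l bk by auto
    have "\<forall>j\<in>{b..b+k}. swp b i xs ! (b+k) \<le> swp b i xs ! j"
    proof
      fix j assume j: "j \<in> {b..b+k}"
      have "swp b i xs ! (b+k) = xs!(b+k)" using lt l bk i k by (simp add: swp_nth)
      moreover have "swp b i xs ! j = (if j = b then xs!i else if j = i then xs!b else xs!j)"
        using lt l bk j by (simp add: swp_nth)
      ultimately show "swp b i xs ! (b+k) \<le> swp b i xs ! j" using E i j by auto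
    qed
    then show ?thesis using inY Y1_def by auto
  qed
  have fY1: "finite Y1" using fY Y1_def by simp
  have h2: "card {b..<b+k} * card {xs\<in>Y1. \<forall>j\<in>{b..<b+k}. xs!b \<le> xs!j} = card Y1"
    by (rule min_pos_count[OF fY1 Y1d, of "{b..<b+k}" b]) (use bk k cl in auto)
  have "{xs\<in>Y1. \<forall>j\<in>{b..<b+k}. xs!b \<le> xs!j} = {xs\<in>Y. Wev xs b k}"
    unfolding Y1_def Wev_def by auto
  then have h3: "k * card {xs\<in>Y. Wev xs b k} = card Y1" using h2 by simp
  have "k * (k + 1) * card {xs\<in>Y. Wev xs b k} = (k + 1) * (k * card {xs\<in>Y. Wev xs b k})"
    by (simp add: algebra_simps)
  also have "\<dots> = card Y" using h3 h1 by simp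
  finally show ?thesis .
qed

lemma perm_swp_cl:
  assumes "xs \<in> permutations_of_set V" "finite V" "i < card V" "j < card V"
  shows "swp i j xs \<in> permutations_of_set V"
proof -
  have "length xs = card V" using assms(1) distinct_card[of xs] by (auto simp: permutations_of_set_def)
  then show ?thesis using swp_perm assms by auto
qed

lemma bonf:
  assumes "finite I" "\<And>i. i \<in> I \<Longrightarrow> finite (A i)"
  shows "real (card (\<Union>i\<in>I. A i)) \<ge> (\<Sum>i\<in>I. real (card (A i))) - (\<Sum>i\<in>I. \<Sum>j\<in>I-{i}. real (card (A i \<inter> A j)))"
  using assms
proof (induction I rule: finite_induct)
  case empty
  then show ?case by simp
next
  case (insert x F)
  define U where "U = (\<Union>i\<in>F. A i)"
  have fx: "finite (A x)" and fU: "finite U" using insert.prems insert.hyps by (auto simp: U_def)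
  have IH: "real (card U) \<ge> (\<Sum>i\<in>F. real (card (A i))) - (\<Sum>i\<in>F. \<Sum>j\<in>F-{i}. real (card (A i \<inter> A j)))"
    using insert.IH insert.prems by (simp add: U_def)
  have cu: "real (card (A x \<union> U)) = real (card (A x)) + real (card U) - real (card (A x \<inter> U))"
    using card_Un_Int[OF fx fU] by simp
  have "A x \<inter> U = (\<Union>j\<in>F. A x \<inter> A j)" by (auto simp: U_def)
  then have ci: "real (card (A x \<inter> U)) \<le> (\<Sum>j\<in>F. real (card (A x \<inter> A j)))"
    using card_UN_le[OF insert.hyps(1), of "\<lambda>j. A x \<inter> A j"] by (simp flip: of_nat_sum)
  have s1: "(\<Sum>j\<in>insert x F - {x}. real (card (A x \<inter> A j))) = (\<Sum>j\<in>F. real (card (A x \<inter> A j)))"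
    using insert.hyps(2) by (simp add: insert_Diff_if)
  have s2: "(\<Sum>j\<in>insert x F - {i}. real (card (A i \<inter> A j))) = real (card (A i \<inter> A x)) + (\<Sum>j\<in>F-{i}. real (card (A i \<inter> A j)))"
    if "i \<in> F" for i
  proof -
    have "insert x F - {i} = insert x (F - {i})" using that insert.hyps(2) by auto
    then show ?thesis using insert.hyps(1,2) by simp
  qed
  have "(\<Sum>i\<in>insert x F. \<Sum>j\<in>insert x F-{i}. real (card (A i \<inter> A j)))
      = (\<Sum>j\<in>F. real (card (A x \<inter> A j))) + (\<Sum>i\<in>F. \<Sum>j\<in>insert x F-{i}. real (card (A i \<inter> A j)))"
    using insert.hyps s1 by simp
  also have "(\<Sum>i\<in>F. \<Sum>j\<in>insert x F-{i}. real (card (A i \<inter> A j)))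
      = (\<Sum>i\<in>F. real (card (A i \<inter> A x))) + (\<Sum>i\<in>F. \<Sum>j\<in>F-{i}. real (card (A i \<inter> A j)))"
    using s2 by (simp add: sum.distrib)
  finally have ds: "(\<Sum>i\<in>insert x F. \<Sum>j\<in>insert x F-{i}. real (card (A i \<inter> A j)))
      \<ge> (\<Sum>j\<in>F. real (card (A x \<inter> A j))) + (\<Sum>i\<in>F. \<Sum>j\<in>F-{i}. real (card (A i \<inter> A j)))"
    by (simp add: sum_nonneg)
  have "(\<Union>i\<in>insert x F. A i) = A x \<union> U" by (simp add: U_def)
  then show ?case using cu ci ds IH insert.hyps by simp
qed

lemma enc_ineq:
  fixes k q q' r r' :: nat
  assumes "r < k" "r' < k" "q < q'"
  shows "2*k*q + r + k < 2*k*q' + r'"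
proof -
  have "2*k*(q+1) \<le> 2*k*q'" using assms(3) by (intro mult_le_mono2) simp
  then show ?thesis using assms(1) by (simp add: algebra_simps)
qed

lemma enc_inj:
  fixes k q q' r r' :: nat
  assumes "r < k" "r' < k" "2*k*q + r = 2*k*q' + r'"
  shows "q = q' \<and> r = r'"
proof -
  have "\<not> q < q'" using enc_ineq[OF assms(1,2)] assms(3) by fastforce
  moreover have "\<not> q' < q" using enc_ineq[OF assms(2,1)] assms(3) by fastforce
  ultimately have "q = q'" by simp
  then show ?thesis using assms(3) by simp
qed

lemma enc_gap:
  fixes k q q' r r' :: nat
  assumes "r < k" "r' < k"
  shows "2*k*q' + r' \<noteq> 2*k*q + r + k"
proof
  assume h: "2*k*q' + r' = 2*k*q + r + k"
  show False
  proof (cases "q < q'")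
    case True then show False using enc_ineq[OF assms(1,2) True] h by simp
  next
    case False
    then have "2*k*q' \<le> 2*k*q" by simp
    then show False using h assms by linarith
  qed
qed

lemma fringe_prob:
  fixes n k Q :: nat
  assumes n: "n \<ge> 2" and k: "k \<ge> 1" and Q: "2*k*Q \<le> n - 1"
  shows "real (card {xs \<in> permutations_of_set {2..n}. \<exists>a. a + k < n - 1 \<and> Wev xs a k})
         \<ge> real (card (permutations_of_set {2..n})) * (Q/(k+1) - (Q/(k+1))^2)"
proof -
  define X where "X = permutations_of_set {2..n}"
  define N where "N = n - 1"
  have cV: "card {2..n} = N" using N_def by simp
  have fX: "finite X" by (simp add: X_def)
  have Xd: "\<And>xs. xs \<in> X \<Longrightarrow> distinct xs \<and> length xs = N"
    using cV distinct_card by (fastforce simp: X_def permutations_of_set_def)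
  have clX: "\<And>i j xs. i < N \<Longrightarrow> j < N \<Longrightarrow> xs \<in> X \<Longrightarrow> swp i j xs \<in> X"
    using perm_swp_cl cV by (auto simp: X_def)
  define f where "f = (\<lambda>(q,r). 2*k*q + r)"
  define I where "I = f ` ({..<Q} \<times> {..<k})"
  define A where "A = (\<lambda>a. {xs\<in>X. Wev xs a k})"
  define p :: real where "p = 1 / (real k * (real k + 1))"
  have inj: "inj_on f ({..<Q} \<times> {..<k})"
    by (rule inj_onI) (auto simp: f_def dest: enc_inj)
  have cI: "card I = Q * k" using card_image[OF inj] by (simp add: I_def card_cartesian_product)
  have fI: "finite I" by (simp add: I_def)
  have Ipos: "a + k < N" if aI: "a \<in> I" for a
  proof -
    obtain x where x: "x \<in> {..<Q} \<times> {..<k}" "a = f x" using aI unfolding I_def by blast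
    obtain q r where qr: "q < Q" "r < k" "a = 2*k*q + r" using x by (cases x) (auto simp: f_def)
    have "2*k*(q+1) \<le> 2*k*Q" using qr(1) by (intro mult_le_mono2) simp
    then show ?thesis using qr Q N_def by (simp add: algebra_simps)
  qed
  have Igap: "b \<noteq> a + k" if "a \<in> I" "b \<in> I" for a b
    using that enc_gap by (auto simp: I_def f_def)
  have kpos: "real k * (real k + 1) > 0" using k by simp
  have cardA: "real (card (A a)) = real (card X) * p" if a: "a \<in> I" for a
  proof -
    have h: "k * (k + 1) * card (A a) = card X" unfolding A_def
      by (rule Wev_count[OF fX Xd Ipos[OF a] k]) (use Ipos[OF a] clX in auto)
    have "real k * (real k + 1) * real (card (A a)) = real (card X)"
      using arg_cong[OF h, of real] by (simp add: algebra_simps)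
    then show ?thesis using kpos by (simp add: p_def field_simps)
  qed
  have pair_lt: "real (card (A a \<inter> A b)) \<le> real (card X) * p^2" if ab: "a \<in> I" "b \<in> I" "a < b" for a b
  proof (cases "b < a + k")
    case True
    have "A a \<inter> A b = {}"
    proof (rule ccontr)
      assume "A a \<inter> A b \<noteq> {}"
      then obtain xs where xs: "xs \<in> X" "Wev xs a k" "Wev xs b k" by (auto simp: A_def)
      have d: "distinct xs" and l: "length xs = N" using Xd[OF xs(1)] by auto
      have "xs!b \<le> xs!(a+k)" using xs(3) True ab(3) k unfolding Wev_def by auto
      moreover have "xs!(a+k) \<le> xs!a" using xs(2) unfolding Wev_def by auto
      moreover have "xs!a \<le> xs!b" using xs(2) True ab(3) unfolding Wev_def by auto
      ultimately have "xs!a = xs!b" by simp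
      moreover have "a < N" "b < N" using Ipos ab(1,2) by fastforce+
      ultimately have "a = b" using d l nth_eq_iff_index_eq[of xs a b] by simp
      then show False using ab(3) by simp
    qed
    then show ?thesis by simp
  next
    case False
    then have ab': "a + k < b" using Igap[OF ab(1,2)] by simp
    have fA: "finite (A a)" using fX by (simp add: A_def)
    have Ad: "\<And>xs. xs \<in> A a \<Longrightarrow> distinct xs \<and> length xs = N" using Xd by (simp add: A_def)
    have clA: "swp i j xs \<in> A a" if "i \<in> {b..b+k}" "j \<in> {b..b+k}" "xs \<in> A a" for i j xs
    proof -
      have ij: "i < N" "j < N" using that(1,2) Ipos[OF ab(2)] by auto
      have xs: "xs \<in> X" "Wev xs a k" using that(3) by (auto simp: A_def)
      have l: "length xs = N" using Xd xs(1) by simp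
      have "Wev (swp i j xs) a k = Wev xs a k"
      proof (rule Wev_local)
        fix l' assume "l' \<in> {a..a+k}"
        then have "l' < b" "l' < N" using ab' ij Ipos[OF ab(1)] by auto
        then show "swp i j xs ! l' = xs ! l'" using that(1,2) ij l by (simp add: swp_nth)
      qed
      then show ?thesis using clX[OF ij xs(1)] xs(2) by (simp add: A_def)
    qed
    have "k * (k + 1) * card {xs\<in>A a. Wev xs b k} = card (A a)"
      by (rule Wev_count[OF fA Ad Ipos[OF ab(2)] k]) (use clA in auto)
    moreover have "{xs\<in>A a. Wev xs b k} = A a \<inter> A b" by (auto simp: A_def)
    ultimately have h: "k * (k + 1) * card (A a \<inter> A b) = card (A a)" by simp
    have "real k * (real k + 1) * real (card (A a \<inter> A b)) = real (card (A a))"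
      using arg_cong[OF h, of real] by (simp add: algebra_simps)
    then have "real (card (A a \<inter> A b)) = real (card (A a)) * p"
      using kpos unfolding p_def by (simp add: field_simps)
    then have "real (card (A a \<inter> A b)) = real (card X) * p * p"
      using cardA[OF ab(1)] by simp
    then show ?thesis by (simp add: power2_eq_square)
  qed
  have pair: "real (card (A a \<inter> A b)) \<le> real (card X) * p^2" if ab: "a \<in> I" "b \<in> I" "a \<noteq> b" for a b
  proof (cases "a < b")
    case True then show ?thesis using pair_lt ab by simp
  next
    case False then have "b < a" using ab(3) by simp
    then show ?thesis using pair_lt[OF ab(2,1)] by (simp add: Int_commute)
  qed
  have fA: "\<And>a. finite (A a)" using fX by (simp add: A_def)
  have B: "real (card (\<Union>a\<in>I. A a)) \<ge> (\<Sum>a\<in>I. real (card (A a))) - (\<Sum>a\<in>I. \<Sum>b\<in>I-{a}. real (card (A a \<inter> A b)))"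
    by (rule bonf[OF fI]) (simp add: fA)
  have s1: "(\<Sum>a\<in>I. real (card (A a))) = real (card I) * (real (card X) * p)"
    using cardA by simp
  have "(\<Sum>a\<in>I. \<Sum>b\<in>I-{a}. real (card (A a \<inter> A b))) \<le> (\<Sum>a\<in>I. \<Sum>b\<in>I. real (card X) * p^2)"
  proof (rule sum_mono)
    fix a assume a: "a \<in> I"
    have "(\<Sum>b\<in>I-{a}. real (card (A a \<inter> A b))) \<le> (\<Sum>b\<in>I-{a}. real (card X) * p^2)"
      by (rule sum_mono) (use pair a in auto)
    also have "\<dots> \<le> (\<Sum>b\<in>I. real (card X) * p^2)"
      by (rule sum_mono2) (use fI in auto)
    finally show "(\<Sum>b\<in>I-{a}. real (card (A a \<inter> A b))) \<le> (\<Sum>b\<in>I. real (card X) * p^2)" .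
  qed
  also have "\<dots> = real (card I) ^ 2 * (real (card X) * p^2)" by (simp add: power2_eq_square)
  finally have s2: "(\<Sum>a\<in>I. \<Sum>b\<in>I-{a}. real (card (A a \<inter> A b))) \<le> real (card I) ^ 2 * (real (card X) * p^2)" .
  have Ip: "real (card I) * p = Q / (k + 1)"
  proof -
    have k0: "real k \<noteq> 0" "real k + 1 \<noteq> 0" using k by auto
    have "real (card I) * p = (real Q * real k) / (real k * (real k + 1))" by (simp add: cI p_def)
    also have "\<dots> = (real k * real Q) / (real k * (real k + 1))" by (simp add: mult.commute)
    also have "\<dots> = real Q / (real k + 1)"
      using mult_divide_mult_cancel_left_if[of "real k" "real Q" "real k + 1"] k0 by simp
    finally show ?thesis by simp
  qed
  have sub: "(\<Union>a\<in>I. A a) \<subseteq> {xs \<in> X. \<exists>a. a + k < n - 1 \<and> Wev xs a k}"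
    using Ipos N_def by (auto simp: A_def)
  have "card (\<Union>a\<in>I. A a) \<le> card {xs \<in> X. \<exists>a. a + k < n - 1 \<and> Wev xs a k}"
    by (rule card_mono) (use fX sub in auto)
  moreover have "real (card (\<Union>a\<in>I. A a)) \<ge> real (card X) * (Q/(k+1) - (Q/(k+1))^2)"
  proof -
    have e: "(Q/(k+1)::real) = real (card I) * p" using Ip by simp
    have "real (card X) * (Q/(k+1) - (Q/(k+1))^2) = real (card I) * (real (card X) * p) - real (card I) ^ 2 * (real (card X) * p^2)"
      unfolding e by (simp add: power2_eq_square algebra_simps)
    then show ?thesis using B s1 s2 by linarith
  qed
  ultimately show ?thesis by (simp add: X_def)
qed

lemma psize_shape: "psize (shape s) = lsize s"
proof (induction s)
  case (LNode a ts)
  have "sum_mset (image_mset psize (image_mset shape ts)) = sum_mset (image_mset lsize ts)"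
    by (simp add: multiset.map_comp o_def LNode cong: image_mset_cong)
  then show ?case by simp
qed

lemma psize_pos: "psize t \<ge> 1"
  by (cases t) auto

lemma size_le_psum: "size M \<le> sum_mset (image_mset psize M)"
proof (induction M)
  case (add x M)
  then show ?case using psize_pos[of x] by simp
qed simp

lemma member_le_psum: "x \<in># M \<Longrightarrow> psize x \<le> sum_mset (image_mset psize M)"
  by (induction M) auto

lemma finite_polya_le: "finite (polya_le n)"
proof (induction n)
  case 0
  have "\<not> psize t \<le> 0" for t using psize_pos[of t] by simp
  then have "polya_le 0 = {}" by (auto simp: polya_le_def)
  then show ?case by simp
next
  case (Suc n)
  have "polya_le (Suc n) \<subseteq> Node ` (\<Union>m\<in>{..n}. multisets_of_size (polya_le n) m)"
  proof
    fix t assume t: "t \<in> polya_le (Suc n)"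
    obtain M where M: "t = Node M" by (cases t)
    have s: "sum_mset (image_mset psize M) \<le> n" using t M by (simp add: polya_le_def)
    have "set_mset M \<subseteq> polya_le n" using s member_le_psum by (force simp: polya_le_def)
    moreover have "size M \<le> n" using s size_le_psum[of M] by simp
    ultimately show "t \<in> Node ` (\<Union>m\<in>{..n}. multisets_of_size (polya_le n) m)"
      using M by (auto simp: multisets_of_size_def)
  qed
  moreover have "finite (Node ` (\<Union>m\<in>{..n}. multisets_of_size (polya_le n) m))"
    using Suc by blast
  ultimately show ?case by (rule finite_subset)
qed

lemma R_facts:
  assumes "n \<ge> 2"
  shows "finite (rec_trees n)" "card (rec_trees n) = card (permutations_of_set {2..n})"
    "card (rec_trees n) > 0"
proof -
  have b: "bij_betw Phi (permutations_of_set {2..n}) (rec_trees n)" using assms by (intro Phi_bij) simp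
  show "finite (rec_trees n)" using bij_betw_finite[OF b] by simp
  show c: "card (rec_trees n) = card (permutations_of_set {2..n})" using bij_betw_same_card[OF b] by simp
  show "card (rec_trees n) > 0" using c by simp
qed

lemma count_k:
  assumes n: "n \<ge> 2" and k: "k \<ge> 1"
  shows "card {xs \<in> permutations_of_set {2..n}. \<exists>a. a + k < n - 1 \<and> Wev xs a k}
         \<le> card {r \<in> rec_trees n. \<exists>s\<in>fringes r. lsize s = k}"
proof -
  let ?Y = "{xs \<in> permutations_of_set {2..n}. \<exists>a. a + k < n - 1 \<and> Wev xs a k}"
  have sub: "Phi ` ?Y \<subseteq> {r \<in> rec_trees n. \<exists>s\<in>fringes r. lsize s = k}"
  proof
    fix r assume "r \<in> Phi ` ?Y"
    then obtain xs a where xs: "xs \<in> permutations_of_set {2..n}" "a + k < n - 1" "Wev xs a k" "r = Phi xs"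
      by blast
    have "length xs = n - 1" using xs(1) distinct_card[of xs] by (auto simp: permutations_of_set_def)
    then have "\<exists>s\<in>fringes (Phi xs). lsize s = k" using Wev_fringe[OF xs(1) _ k xs(3)] xs(2) by simp
    moreover have "Phi xs \<in> rec_trees n" using Phi_in[OF xs(1)] n by simp
    ultimately show "r \<in> {r \<in> rec_trees n. \<exists>s\<in>fringes r. lsize s = k}" using xs(4) by simp
  qed
  have "inj_on Phi ?Y" using Phi_inj by (rule inj_on_subset) auto
  then have "card (Phi ` ?Y) = card ?Y" by (rule card_image)
  moreover have "card (Phi ` ?Y) \<le> card {r \<in> rec_trees n. \<exists>s\<in>fringes r. lsize s = k}"
    using R_facts(1)[OF n] sub by (intro card_mono) auto
  ultimately show ?thesis by simp
qed

lemma term_eq: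
  assumes n: "n \<ge> 2"
  shows "1 - S_coeff t n / T_coeff n
         = real (card {r \<in> rec_trees n. \<exists>s\<in>fringes r. shape s = t}) / real (card (rec_trees n))"
proof -
  let ?R = "rec_trees n"
  let ?G = "{r \<in> ?R. \<forall>s\<in>fringes r. shape s \<noteq> t}"
  let ?B = "{r \<in> ?R. \<exists>s\<in>fringes r. shape s = t}"
  have fR: "finite ?R" and cR: "card ?R > 0" using R_facts[OF n] by auto
  have RGB: "?R = ?G \<union> ?B" by blast
  have "card (?G \<union> ?B) = card ?G + card ?B" by (rule card_Un_disjoint) (use fR in auto)
  then have "card ?R = card ?G + card ?B" using RGB by simp
  then have e: "real (card ?G) = real (card ?R) - real (card ?B)" by simp
  have "S_coeff t n / T_coeff n = real (card ?G) / real (card ?R)"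
    unfolding S_coeff_def T_coeff_def by simp
  also have "\<dots> = 1 - real (card ?B) / real (card ?R)" using cR e by (simp add: field_simps)
  finally show ?thesis by simp
qed

lemma sum_lower:
  assumes n: "n \<ge> 2" and fK: "finite K" and K: "\<And>k. k \<in> K \<Longrightarrow> L \<le> real k \<and> k \<le> n"
  shows "(\<Sum>t\<in>{t \<in> polya_le n. real (psize t) \<ge> L}. 1 - S_coeff t n / T_coeff n)
         \<ge> (\<Sum>k\<in>K. real (card {r \<in> rec_trees n. \<exists>s\<in>fringes r. lsize s = k}) / real (card (rec_trees n)))"
proof -
  let ?R = "rec_trees n"
  let ?A = "{t \<in> polya_le n. real (psize t) \<ge> L}"
  define B where "B = (\<lambda>t. {r \<in> ?R. \<exists>s\<in>fringes r. shape s = t})"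
  define g where "g = (\<lambda>t. real (card (B t)) / real (card ?R))"
  define Ak where "Ak = (\<lambda>k. {t. psize t = k})"
  have fR: "finite ?R" and cR: "card ?R > 0" using R_facts[OF n] by auto
  have g0: "\<And>t. g t \<ge> 0" by (simp add: g_def)
  have fA: "finite ?A" using finite_polya_le[of n] by simp
  have fAk: "finite (Ak k)" for k using finite_polya_le[of k] by (rule finite_subset[rotated]) (auto simp: Ak_def polya_le_def)
  have AkA: "(\<Union>k\<in>K. Ak k) \<subseteq> ?A" using K by (auto simp: Ak_def polya_le_def)
  have lhs: "(\<Sum>t\<in>?A. 1 - S_coeff t n / T_coeff n) = (\<Sum>t\<in>?A. g t)"
    using term_eq[OF n] by (simp add: g_def B_def)
  have "(\<Sum>t\<in>?A. g t) \<ge> (\<Sum>t\<in>(\<Union>k\<in>K. Ak k). g t)"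
    by (rule sum_mono2[OF fA AkA]) (simp add: g0)
  moreover have "(\<Sum>t\<in>(\<Union>k\<in>K. Ak k). g t) = (\<Sum>k\<in>K. \<Sum>t\<in>Ak k. g t)"
    by (rule sum.UNION_disjoint[OF fK]) (simp_all add: fAk, auto simp: Ak_def)
  moreover have "(\<Sum>t\<in>Ak k. g t) \<ge> real (card {r \<in> ?R. \<exists>s\<in>fringes r. lsize s = k}) / real (card ?R)" for k
  proof -
    have "{r \<in> ?R. \<exists>s\<in>fringes r. lsize s = k} \<subseteq> (\<Union>t\<in>Ak k. B t)"
    proof
      fix r assume "r \<in> {r \<in> ?R. \<exists>s\<in>fringes r. lsize s = k}"
      then obtain s where r: "r \<in> ?R" "s \<in> fringes r" "lsize s = k" by blast
      then have "shape s \<in> Ak k" by (simp add: Ak_def psize_shape)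
      moreover have "r \<in> B (shape s)" using r by (auto simp: B_def)
      ultimately show "r \<in> (\<Union>t\<in>Ak k. B t)" by blast
    qed
    note sub = this
    have finU: "finite (\<Union>t\<in>Ak k. B t)" by (rule finite_subset[OF _ fR]) (auto simp: B_def)
    have "card {r \<in> ?R. \<exists>s\<in>fringes r. lsize s = k} \<le> card (\<Union>t\<in>Ak k. B t)"
      by (rule card_mono[OF finU sub])
    also have "\<dots> \<le> (\<Sum>t\<in>Ak k. card (B t))" by (rule card_UN_le[OF fAk])
    finally have "real (card {r \<in> ?R. \<exists>s\<in>fringes r. lsize s = k}) \<le> (\<Sum>t\<in>Ak k. real (card (B t)))"
      by (simp flip: of_nat_sum)
    then have "real (card {r \<in> ?R. \<exists>s\<in>fringes r. lsize s = k}) / real (card ?R) \<le> (\<Sum>t\<in>Ak k. real (card (B t))) / real (card ?R)"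
      using cR by (intro divide_right_mono) auto
    also have "\<dots> = (\<Sum>t\<in>Ak k. g t)" by (simp add: g_def sum_divide_distrib)
    finally show ?thesis .
  qed
  then have "(\<Sum>k\<in>K. \<Sum>t\<in>Ak k. g t) \<ge> (\<Sum>k\<in>K. real (card {r \<in> ?R. \<exists>s\<in>fringes r. lsize s = k}) / real (card ?R))"
    by (intro sum_mono) auto
  ultimately show ?thesis using lhs by linarith
qed

lemma x_bounds:
  fixes n k :: nat
  assumes n: "n \<ge> 400" and k1: "sqrt (real n) \<le> real k" and k2: "real k \<le> 2 * sqrt (real n) + 2"
  defines "Q \<equiv> (n - 1) div (2 * k)"
  shows "(Q/(k+1) - (Q/(k+1))^2 :: real) \<ge> 1/48"
proof -
  define s where "s = sqrt (real n)"
  have s20: "s \<ge> 20"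
  proof -
    have "sqrt 400 \<le> s" unfolding s_def using n by (intro real_sqrt_le_mono) simp
    moreover have "sqrt (400::real) = 20" by (simp add: real_sqrt_eq_iff)
    ultimately show ?thesis by simp
  qed
  have ns: "real n = s^2" unfolding s_def by simp
  have kpos: "k \<ge> 1" using k1 s20 s_def by (cases k) auto
  have d1: "2 * k * Q \<le> n - 1" unfolding Q_def by (metis times_div_less_eq_dividend)
  have d2: "n - 1 < 2 * k * (Q + 1)"
  proof -
    have "n - 1 = 2 * k * Q + (n - 1) mod (2 * k)" unfolding Q_def by simp
    moreover have "(n - 1) mod (2 * k) < 2 * k" using kpos by simp
    ultimately show ?thesis by (simp add: algebra_simps)
  qed
  have s0: "s \<ge> 0" using s20 by simp
  have kk: "s * s \<le> real k * real k" using k1 s0 unfolding s_def[symmetric] by (intro mult_mono) auto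
  have r1: "2 * real k * real Q \<le> s * s - 1"
  proof -
    have "real (2 * k * Q) \<le> real (n - 1)" using d1 by (simp only: of_nat_le_iff)
    then show ?thesis using n ns by (simp add: power2_eq_square of_nat_diff)
  qed
  have r2: "s * s - 1 < 2 * real k * (real Q + 1)"
  proof -
    have "real (n - 1) < real (2 * k * (Q + 1))" using d2 by (simp only: of_nat_less_iff)
    then show ?thesis using n ns by (simp add: power2_eq_square of_nat_diff algebra_simps)
  qed
  have kp: "real k > 0" using kpos by simp
  have "real k * (2 * real Q) < real k * real k" using r1 kk by (simp add: algebra_simps)
  then have up: "2 * real Q < real k" using kp by (simp add: mult_less_cancel_left_pos)
  have "2 * real k * (real Q + 1) \<le> 2 * (2 * s + 2) * (real Q + 1)"
    using k2 unfolding s_def[symmetric] by (intro mult_right_mono) auto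
  then have "(s - 1) * (s + 1) < (s + 1) * (4 * (real Q + 1))" using r2 by (simp add: algebra_simps)
  then have "(s + 1) * (s - 1) < (s + 1) * (4 * (real Q + 1))" by (simp add: mult.commute)
  then have lo: "s - 1 < 4 * (real Q + 1)" using s0 by (simp add: mult_less_cancel_left_pos)
  define x where "x = real Q / (real k + 1)"
  have xu: "x \<le> 1/2" using up kp by (simp add: x_def field_simps)
  have xl: "x \<ge> 1/24"
  proof -
    have l2: "s - 5 < 4 * real Q" using lo by (simp add: algebra_simps)
    have l3: "6 * s - 30 < 24 * real Q" using l2 by simp
    have k2': "real k \<le> 2 * s + 2" using k2 unfolding s_def .
    have "real k + 1 \<le> 24 * real Q" using l3 k2' s20 by linarith
    then show ?thesis using kp by (simp add: x_def field_simps)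
  qed
  have "x - x^2 = x * (1 - x)" by (simp add: power2_eq_square algebra_simps)
  also have "\<dots> \<ge> x * (1/2)" using xu xl by (intro mult_left_mono) auto
  finally have "x - x^2 \<ge> x / 2" by simp
  then have fin: "x - x^2 \<ge> 1/48" using xl by linarith
  have e: "(Q/(k+1) :: real) = x" unfolding x_def by simp
  show ?thesis unfolding e using fin .
qed


lemma per_k:
  fixes n k :: nat
  assumes n: "n \<ge> 400" and k1: "sqrt (real n) \<le> real k" and k2: "real k \<le> 2 * sqrt (real n) + 2"
  shows "real (card {r \<in> rec_trees n. \<exists>s\<in>fringes r. lsize s = k}) / real (card (rec_trees n)) \<ge> 1/48"
proof -
  define Q where "Q = (n - 1) div (2 * k)"
  have "sqrt 400 \<le> sqrt (real n)" using n by (intro real_sqrt_le_mono) simp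
  moreover have "sqrt (400::real) = 20" by (simp add: real_sqrt_eq_iff)
  ultimately have "real k \<ge> 20" using k1 by simp
  then have k: "k \<ge> 1" by simp
  have n2: "n \<ge> 2" using n by simp
  have d1: "2 * k * Q \<le> n - 1" unfolding Q_def by (metis times_div_less_eq_dividend)
  define X where "X = permutations_of_set {2..n}"
  have cX: "card (rec_trees n) = card X" "card (rec_trees n) > 0" using R_facts[OF n2] by (auto simp: X_def)
  have "real (card X) * (Q/(k+1) - (Q/(k+1))^2)
        \<le> real (card {xs \<in> X. \<exists>a. a + k < n - 1 \<and> Wev xs a k})"
    unfolding X_def by (rule fringe_prob[OF n2 k d1])
  also have "\<dots> \<le> real (card {r \<in> rec_trees n. \<exists>s\<in>fringes r. lsize s = k})"
    using count_k[OF n2 k] by (simp add: X_def)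
  finally have h: "real (card X) * (Q/(k+1) - (Q/(k+1))^2) \<le> real (card {r \<in> rec_trees n. \<exists>s\<in>fringes r. lsize s = k})" .
  have xb: "(Q/(k+1) - (Q/(k+1))^2 :: real) \<ge> 1/48"
    unfolding Q_def by (rule x_bounds[OF n k1 k2])
  have cpos: "real (card X) > 0" using cX by simp
  have "real (card X) * (1/48) \<le> real (card X) * (Q/(k+1) - (Q/(k+1))^2)"
    using xb cpos by (intro mult_left_mono) auto
  then have "real (card X) * (1/48) \<le> real (card {r \<in> rec_trees n. \<exists>s\<in>fringes r. lsize s = k})"
    using h by linarith
  then show ?thesis using cpos cX(1) by (simp add: field_simps)
qed


lemma log_ev: "eventually (\<lambda>n::nat. log (1/polya_sigma) (real n) \<le> sqrt (real n)) at_top"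
proof (cases "ln (1/polya_sigma) \<le> 0")
  case True
  show ?thesis
  proof (rule eventually_mono[OF eventually_ge_at_top[of 1]])
    fix n :: nat assume n: "n \<ge> 1"
    have "ln (real n) \<ge> 0" using n by simp
    then have "ln (real n) / ln (1/polya_sigma) \<le> 0" using True by (rule divide_nonneg_nonpos)
    then show "log (1/polya_sigma) (real n) \<le> sqrt (real n)"
      unfolding log_def using real_sqrt_ge_zero[of "real n"] by linarith
  qed
next
  case False
  define c where "c = ln (1/polya_sigma)"
  have c: "c > 0" using False c_def by simp
  have "eventually (\<lambda>n::nat. ln (real n) / c \<le> sqrt (real n)) at_top" using c by real_asymp
  then show ?thesis by (simp add: log_def c_def)
qed

theorem proposition2p9:
  "(\<lambda>n::nat. \<Sum>t\<in>{t \<in> polya_le n. real (psize t) \<ge> log (1 / polya_sigma) (real n)}.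
       1 - S_coeff t n / T_coeff n) \<in> \<Omega>(\<lambda>n. sqrt (real n))"
proof -
  define f where "f = (\<lambda>n::nat. \<Sum>t\<in>{t \<in> polya_le n. real (psize t) \<ge> log (1 / polya_sigma) (real n)}.
       1 - S_coeff t n / T_coeff n)"
  have main: "f n \<ge> sqrt (real n) / 48"
    if n: "n \<ge> 400" and L: "log (1 / polya_sigma) (real n) \<le> sqrt (real n)" for n :: nat
  proof -
    define s where "s = sqrt (real n)"
    have s20: "s \<ge> 20"
    proof -
      have "sqrt 400 \<le> s" unfolding s_def using n by (intro real_sqrt_le_mono) simp
      moreover have "sqrt (400::real) = 20" by (simp add: real_sqrt_eq_iff)
      ultimately show ?thesis by simp
    qed
    have ns: "real n = s * s" unfolding s_def by simp
    define m where "m = nat \<lceil>s\<rceil>"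
    have m1: "s \<le> real m" unfolding m_def by linarith
    have m2: "real m < s + 1" unfolding m_def using s20 by linarith
    define K where "K = {m..2*m}"
    have Kk: "s \<le> real k \<and> real k \<le> 2 * s + 2" if "k \<in> K" for k
    proof -
      have "m \<le> k" "k \<le> 2 * m" using that by (auto simp: K_def)
      then have "real m \<le> real k" "real k \<le> 2 * real m" by linarith+
      then show ?thesis using m1 m2 by linarith
    qed
    have sn: "2 * s + 2 \<le> real n"
    proof -
      have "s * 20 \<le> s * s" using s20 by (intro mult_left_mono) auto
      then show ?thesis using ns s20 by linarith
    qed
    have Kc: "log (1 / polya_sigma) (real n) \<le> real k \<and> k \<le> n" if "k \<in> K" for k
    proof -
      have "real k \<le> real n" using Kk[OF that] sn by linarith
      then show ?thesis using Kk[OF that] L s_def by simp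
    qed
    have n2: "n \<ge> 2" using n by simp
    have "s / 48 \<le> real (m + 1) / 48" using m1 by (intro divide_right_mono) auto
    also have "\<dots> = (\<Sum>k\<in>K. (1/48::real))" by (simp add: K_def)
    also have "\<dots> \<le> (\<Sum>k\<in>K. real (card {r \<in> rec_trees n. \<exists>s\<in>fringes r. lsize s = k}) / real (card (rec_trees n)))"
      by (rule sum_mono) (use per_k[OF n] Kk s_def in auto)
    also have "\<dots> \<le> f n"
      unfolding f_def by (rule sum_lower[OF n2]) (use Kc in \<open>auto simp: K_def\<close>)
    finally have "f n \<ge> s / 48" .
    then show ?thesis unfolding s_def .
  qed
  have ev: "eventually (\<lambda>n. norm (f n) \<ge> (1/48) * norm (sqrt (real n))) at_top"
  proof (rule eventually_mono[OF eventually_conj[OF eventually_ge_at_top[of 400] log_ev]])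
    fix n :: nat assume "400 \<le> n \<and> log (1/polya_sigma) (real n) \<le> sqrt (real n)"
    then have "f n \<ge> sqrt (real n) / 48" using main by simp
    then show "norm (f n) \<ge> (1/48) * norm (sqrt (real n))" by simp
  qed
  have "f \<in> \<Omega>(\<lambda>n. sqrt (real n))"
    unfolding bigomega_def using ev by (intro CollectI exI[of _ "1/48"]) simp
  then show ?thesis by (simp add: f_def)
qed

end
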